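(* Let $d\ge 3$ be odd, $n=\frac{d^2+1}{2}$, and consider the $[[d^2+1,2,d]]$ generalized bicycle code defined by $a(x)=1+x$, $b(x)=1+x^d$ in $R_n$. Let $O$ be the permutation of the $2n$ data qubits given on $\mathbb{F}_2^{2n}$ by $O\big((p(x),q(x))\big)=(x\,q(x^d),\,p(x^d))$ (the composition $\Pi_{1,0}E_dS$ of the swap $S:(p,q)\mapsto(q,p)$, the map $E_d:(p,q)\mapsto(p(x^d),q(x^d))$, and $\Pi_{1,0}:(p,q)\mapsto(xp,q)$), acting on Pauli operators by permuting tensor factors. Then applying $O$ implements a logical CNOT gate between the two logical qubits (with respect to a suitable choice of logical basis).
   Context: $R_n=\mathbb{F}_2[x]/\langle x^n-1\rangle$; the $2n$ qubits are labelled by the coefficients of pairs $(p(x),q(x))$ of elements of $R_n$. The generalized bicycle code defined by $a,b$ is the CSS code whose X-stabilizer group is generated by X-type Paulis on the vectors $x^i(a(x),b(x))$ and whose Z-stabilizer group is generated by Z-type Paulis on $x^i(b(x^{-1}),a(x^{-1}))$, $0\le i\le n-1$, $x^{-1}=x^{n-1}$. *)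

theory Defs
  imports "HOL-Library.Z2" "HOL-Computational_Algebra.Polynomial"
begin

text \<open>Elements of R_n = F_2[x]/(x^n - 1) are represented by their canonical
  representatives: polynomials over F_2 (type bit) reduced modulo x^n - 1.
  Qubit vectors in F_2^{2n} are pairs (p,q) of such representatives.\<close>

definition cyc :: "nat \<Rightarrow> bit poly" where
  "cyc n = monom 1 n - 1"

definition red :: "nat \<Rightarrow> bit poly \<Rightarrow> bit poly" where
  "red n p = p mod cyc n"

definition Rn :: "nat \<Rightarrow> bit poly set" where
  "Rn n = {p. red n p = p}"

definition Rvec :: "nat \<Rightarrow> (bit poly \<times> bit poly) set" where
  "Rvec n = Rn n \<times> Rn n"

definition vadd :: "bit poly \<times> bit poly \<Rightarrow> bit poly \<times> bit poly \<Rightarrow> bit poly \<times> bit poly" where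
  "vadd u v = (fst u + fst v, snd u + snd v)"

definition vsum :: "('i \<Rightarrow> bit poly \<times> bit poly) \<Rightarrow> 'i set \<Rightarrow> bit poly \<times> bit poly" where
  "vsum f I = ((\<Sum>i\<in>I. fst (f i)), (\<Sum>i\<in>I. snd (f i)))"

definition xshift :: "nat \<Rightarrow> nat \<Rightarrow> bit poly \<Rightarrow> bit poly" where
  "xshift n i p = red n (monom 1 i * p)"

definition subst_pow :: "nat \<Rightarrow> nat \<Rightarrow> bit poly \<Rightarrow> bit poly" where
  "subst_pow n k p = red n (pcompose p (monom 1 k))"

text \<open>p(x) \<mapsto> p(x^{-1}) in R_n, where x^{-1} = x^{n-1}\<close>
definition inv_sub :: "nat \<Rightarrow> bit poly \<Rightarrow> bit poly" where
  "inv_sub n p = subst_pow n (n - 1) p"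

definition dot :: "nat \<Rightarrow> bit poly \<times> bit poly \<Rightarrow> bit poly \<times> bit poly \<Rightarrow> bit" where
  "dot n u v = (\<Sum>k<n. coeff (fst u) k * coeff (fst v) k + coeff (snd u) k * coeff (snd v) k)"

definition cyc_span :: "nat \<Rightarrow> bit poly \<Rightarrow> bit poly \<Rightarrow> (bit poly \<times> bit poly) set" where
  "cyc_span n f g = {vsum (\<lambda>i. (xshift n i f, xshift n i g)) I | I. I \<subseteq> {..<n}}"

definition GB_X :: "nat \<Rightarrow> bit poly \<Rightarrow> bit poly \<Rightarrow> (bit poly \<times> bit poly) set" where
  "GB_X n a b = cyc_span n a b"

definition GB_Z :: "nat \<Rightarrow> bit poly \<Rightarrow> bit poly \<Rightarrow> (bit poly \<times> bit poly) set" where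
  "GB_Z n a b = cyc_span n (inv_sub n b) (inv_sub n a)"

definition orth :: "nat \<Rightarrow> (bit poly \<times> bit poly) set \<Rightarrow> (bit poly \<times> bit poly) set" where
  "orth n S = {v \<in> Rvec n. \<forall>s\<in>S. dot n v s = 0}"

definition bsc :: "bool \<Rightarrow> bit poly \<times> bit poly \<Rightarrow> bit poly \<times> bit poly" where
  "bsc c v = (if c then v else (0, 0))"

definition O_map :: "nat \<Rightarrow> nat \<Rightarrow> bit poly \<times> bit poly \<Rightarrow> bit poly \<times> bit poly" where
  "O_map n d v = (xshift n 1 (subst_pow n d (snd v)), subst_pow n d (fst v))"

text \<open>A qubit permutation O (acting on X-type Paulis X^v by v \<mapsto> O v and on
  Z-type Paulis Z^w by w \<mapsto> O w) implements a logical CNOT on the two logical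
  qubits of the CSS code with X-stabilizer space SX and Z-stabilizer space SZ:
  O preserves the stabilizer group, and there are logical operators
  X1,X2 (X-type, commuting with SZ) and Z1,Z2 (Z-type, commuting with SX)
  forming a logical basis (canonical pairing, spanning all logicals modulo
  stabilizers) such that, modulo stabilizers,
  X1 \<mapsto> X1 X2, X2 \<mapsto> X2, Z1 \<mapsto> Z1, Z2 \<mapsto> Z1 Z2.\<close>
definition implements_logical_CNOT ::
  "nat \<Rightarrow> (bit poly \<times> bit poly) set \<Rightarrow> (bit poly \<times> bit poly) set
     \<Rightarrow> (bit poly \<times> bit poly \<Rightarrow> bit poly \<times> bit poly) \<Rightarrow> bool" where
  "implements_logical_CNOT n SX SZ Pm \<longleftrightarrow>
     Pm ` SX = SX \<and> Pm ` SZ = SZ \<and>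
     (\<exists>x1 x2 z1 z2.
        x1 \<in> orth n SZ \<and> x2 \<in> orth n SZ \<and> z1 \<in> orth n SX \<and> z2 \<in> orth n SX \<and>
        dot n x1 z1 = 1 \<and> dot n x1 z2 = 0 \<and> dot n x2 z1 = 0 \<and> dot n x2 z2 = 1 \<and>
        (\<forall>v\<in>orth n SZ. \<exists>c1 c2. vadd v (vadd (bsc c1 x1) (bsc c2 x2)) \<in> SX) \<and>
        (\<forall>w\<in>orth n SX. \<exists>c1 c2. vadd w (vadd (bsc c1 z1) (bsc c2 z2)) \<in> SZ) \<and>
        vadd (Pm x1) (vadd x1 x2) \<in> SX \<and>
        vadd (Pm x2) x2 \<in> SX \<and>
        vadd (Pm z1) z1 \<in> SZ \<and>
        vadd (Pm z2) (vadd z1 z2) \<in> SZ)"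

end

theory Submission
  imports Defs
begin

lemma bit_add_self [simp]: "(c::bit) + c = 0"
  by (cases c) simp_all

lemma bpoly_add_self [simp]: "(p::bit poly) + p = 0"
  by (rule poly_eqI) (simp only: coeff_add bit_add_self coeff_0)

lemma bpoly_two [simp]: "(2::bit poly) = 0"
  by (metis one_add_one bpoly_add_self)

lemma bpoly_minus [simp]: "-(p::bit poly) = p"
  by (simp add: poly_eq_iff)

lemma bpoly_diff: "(p::bit poly) - q = p + q"
  by (simp add: poly_eq_iff)

lemma cyc_bit: "cyc n = monom 1 n + 1"
  by (simp add: cyc_def bpoly_diff)

lemma degree_cyc: "n > 0 \<Longrightarrow> degree (cyc n) = n"
proof -
  assume n: "n > 0"
  have "degree (monom (1::bit) n + 1) = degree (monom (1::bit) n)"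
    by (rule degree_add_eq_left) (use n in \<open>simp add: degree_monom_eq\<close>)
  then show ?thesis by (simp add: cyc_bit degree_monom_eq)
qed

lemma cyc_nz: "n > 0 \<Longrightarrow> cyc n \<noteq> 0"
  by (metis degree_0 degree_cyc less_irrefl)

lemma red_add: "red n (p + q) = red n p + red n q"
  by (simp add: red_def poly_mod_add_left)

lemma red_0 [simp]: "red n 0 = 0"
  by (simp add: red_def)

lemma red_sum: "red n (sum f A) = (\<Sum>i\<in>A. red n (f i))"
  by (induction A rule: infinite_finite_induct) (simp_all add: red_add)

lemma red_red [simp]: "red n (red n p) = red n p"
  by (simp add: red_def)

lemma red_mult_left: "red n (red n p * q) = red n (p * q)"
  by (simp add: red_def mod_mult_left_eq)

lemma red_mult_right: "red n (p * red n q) = red n (p * q)"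
  by (simp add: red_def mod_mult_right_eq)

lemma red_eq_iff: "red n p = red n q \<longleftrightarrow> cyc n dvd p + q"
  by (simp add: red_def mod_eq_dvd_iff bpoly_diff)

lemma red_cong_mult: "red n p = red n q \<Longrightarrow> red n (f * p) = red n (f * q)"
  by (metis red_mult_right)

lemma red_less: "n > 0 \<Longrightarrow> degree p < n \<Longrightarrow> red n p = p"
  by (simp add: red_def mod_poly_less degree_cyc)

lemma red_degree: "n > 0 \<Longrightarrow> degree (red n p) < n \<or> red n p = 0"
  using degree_mod_less[OF cyc_nz, of n p] degree_cyc by (auto simp: red_def)

lemma Rn_coeff: "n > 0 \<Longrightarrow> p \<in> Rn n \<Longrightarrow> k \<ge> n \<Longrightarrow> coeff p k = 0"
proof -
  assume "n > 0" "p \<in> Rn n" "k \<ge> n"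
  then have "degree p < n \<or> p = 0" using red_degree[of n p] by (simp add: Rn_def)
  then show ?thesis using \<open>k \<ge> n\<close> by (cases "p = 0") (auto intro!: coeff_eq_0)
qed

lemma red_cyc [simp]: "red n (cyc n) = 0"
  by (simp add: red_def)

lemma dvd_pow_sub: "(monom (1::bit) n + 1) dvd monom 1 (n*m) + 1"
proof (induction m)
  case 0 then show ?case by simp
next
  case (Suc m)
  have eq: "monom (1::bit) (n * Suc m) + 1 = monom 1 n * (monom 1 (n*m) + 1) + (monom 1 n + 1)"
    by (simp add: mult_monom algebra_simps)
  show ?case unfolding eq by (intro dvd_add dvd_mult Suc.IH dvd_refl)
qed

lemma red_monom: "n > 0 \<Longrightarrow> red n (monom 1 j) = monom 1 (j mod n)"
proof -
  assume n: "n > 0"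
  have "red n (monom 1 (j mod n)) = monom 1 (j mod n)"
    using n by (intro red_less) (simp_all add: degree_monom_eq)
  moreover have "cyc n dvd monom 1 j + monom 1 (j mod n)"
  proof -
    have "monom (1::bit) j = monom 1 (j mod n) * monom 1 (n * (j div n))"
      by (simp add: mult_monom)
    then have "monom (1::bit) j + monom 1 (j mod n) = monom 1 (j mod n) * (monom 1 (n * (j div n)) + 1)"
      by (simp add: algebra_simps)
    then show ?thesis using dvd_pow_sub[of n "j div n"] by (simp add: cyc_bit)
  qed
  ultimately show ?thesis by (metis red_eq_iff)
qed

lemma red_smult: "red n (smult c p) = smult c (red n p)"
  by (simp add: red_def mod_smult_left)

lemma pcompose_monom1: "pcompose (monom 1 k) q = q ^ k"
proof (induction k)
  case 0 then show ?case by (simp add: pcompose_1 flip: one_poly_def)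
next
  case (Suc k)
  have "monom (1::'a) (Suc k) = pCons 0 (monom 1 k)" by (simp add: monom_Suc)
  then show ?case using Suc by (simp add: pcompose_pCons)
qed

lemma pcompose_XX: "pcompose (monom (1::'a::comm_ring_1) e) (monom 1 d) = monom 1 (e * d)"
  by (simp add: pcompose_monom1 monom_power mult.commute)

lemma pcompose_X1 [simp]: "pcompose (p::'a::comm_ring_1 poly) (monom 1 1) = p"
proof -
  have "monom (1::'a::comm_ring_1) 1 = [:0, 1:]" by (simp add: monom_Suc)
  then show ?thesis by simp
qed

lemma red_pcomp_outer:
  assumes "red n p = red n q"
  shows "red n (pcompose p (monom 1 d)) = red n (pcompose q (monom 1 d))"
proof -
  from assms obtain h where h: "p + q = cyc n * h" by (auto simp: red_eq_iff)
  have "pcompose p (monom 1 d) + pcompose q (monom 1 d) = pcompose (p + q) (monom 1 d)"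
    by (simp add: pcompose_add)
  also have "\<dots> = (monom 1 (n * d) + 1) * pcompose h (monom 1 d)"
    by (simp add: h pcompose_mult cyc_bit pcompose_add pcompose_XX pcompose_1)
  finally have "cyc n dvd pcompose p (monom 1 d) + pcompose q (monom 1 d)"
    using dvd_pow_sub[of n d] by (simp add: cyc_bit)
  then show ?thesis by (simp add: red_eq_iff)
qed

lemma red_pcomp_inner:
  assumes "red n p = red n q"
  shows "red n (pcompose g p) = red n (pcompose g q)"
proof (induction g rule: pCons_induct)
  case 0 then show ?case by simp
next
  case (pCons a g)
  have "red n (p * pcompose g p) = red n (q * pcompose g q)"
    by (metis assms pCons.IH red_mult_left red_mult_right)
  then show ?case by (simp add: pcompose_pCons red_add)
qed

lemma subst_pow_red: "subst_pow n d (red n p) = red n (pcompose p (monom 1 d))"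
  unfolding subst_pow_def by (rule red_pcomp_outer) simp

lemma xshift_red: "xshift n i (red n p) = red n (monom 1 i * p)"
  unfolding xshift_def by (simp add: red_mult_right)

lemma Rn_red [simp]: "red n p \<in> Rn n"
  by (simp add: Rn_def)

lemma Rn_sum_monoms:
  assumes n: "n > 0" and p: "p \<in> Rn n"
  shows "p = (\<Sum>i<n. monom (coeff p i) i)"
proof -
  have "degree p \<le> n - 1"
    using red_degree[OF n, of p] p by (cases "p = 0") (auto simp: Rn_def)
  then have "(\<Sum>i\<le>n-1. monom (coeff p i) i) = p" by (rule poly_as_sum_of_monoms')
  moreover have "{..n-1} = {..<n}" using n by auto
  ultimately show ?thesis by simp
qed

lemma Rn_sum_set:
  assumes n: "n > 0" and p: "p \<in> Rn n"
  shows "p = (\<Sum>i\<in>{i. i < n \<and> coeff p i = 1}. monom 1 i)"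
proof -
  have "p = (\<Sum>i<n. monom (coeff p i) i)" by (rule Rn_sum_monoms[OF n p])
  also have "\<dots> = (\<Sum>i<n. if coeff p i = 1 then monom 1 i else 0)"
    by (intro sum.cong refl) auto
  also have "\<dots> = (\<Sum>i\<in>{i\<in>{..<n}. coeff p i = 1}. monom 1 i)"
    by (rule sum.inter_filter[OF finite_lessThan, symmetric])
  also have "{i\<in>{..<n}. coeff p i = 1} = {i. i < n \<and> coeff p i = 1}" by auto
  finally show ?thesis .
qed

lemma cyc_span_char:
  assumes n: "n > 0"
  shows "cyc_span n u v = {(red n (f * u), red n (f * v)) | f. True}"
proof (intro set_eqI iffI)
  fix w assume "w \<in> cyc_span n u v"
  then obtain I where w: "w = vsum (\<lambda>i. (xshift n i u, xshift n i v)) I"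
    by (auto simp: cyc_span_def)
  have "w = (red n ((\<Sum>i\<in>I. monom 1 i) * u), red n ((\<Sum>i\<in>I. monom 1 i) * v))"
    by (simp add: w vsum_def xshift_def red_sum sum_distrib_right)
  then show "w \<in> {(red n (f * u), red n (f * v)) | f. True}" by blast
next
  fix w assume "w \<in> {(red n (f * u), red n (f * v)) | f. True}"
  then obtain f where w: "w = (red n (f * u), red n (f * v))" by blast
  define I where "I = {i. i < n \<and> coeff (red n f) i = 1}"
  have g: "red n f = (\<Sum>i\<in>I. monom 1 i)"
    unfolding I_def by (rule Rn_sum_set[OF n]) simp
  have "red n (f * u) = red n ((\<Sum>i\<in>I. monom 1 i) * u)"
    by (metis g red_mult_left)
  moreover have "red n (f * v) = red n ((\<Sum>i\<in>I. monom 1 i) * v)"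
    by (metis g red_mult_left)
  ultimately have "w = vsum (\<lambda>i. (xshift n i u, xshift n i v)) I"
    by (simp add: w vsum_def xshift_def red_sum sum_distrib_right)
  moreover have "I \<subseteq> {..<n}" by (auto simp: I_def)
  ultimately show "w \<in> cyc_span n u v" by (auto simp: cyc_span_def)
qed

lemma mod_shift_iff:
  fixes n s j k :: nat
  assumes "n > 0" "j < n" "k < n"
  shows "(s + j) mod n = k \<longleftrightarrow> j = (k + n - s mod n) mod n"
proof -
  define t where "t = s mod n"
  have t: "t < n" using assms by (simp add: t_def)
  have e: "(s + j) mod n = (t + j) mod n" by (simp add: t_def mod_add_left_eq)
  show ?thesis
  proof (cases "t + j < n")
    case True
    then have "(t + j) mod n = t + j" by simp
    moreover have "(k + n - t) mod n = (if t \<le> k then k - t else k + n - t)"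
      using t assms by (auto simp: le_mod_geq)
    ultimately show ?thesis using True e t assms by (auto simp: t_def[symmetric])
  next
    case False
    then have "(t + j) mod n = t + j - n" using t assms by (simp add: le_mod_geq)
    moreover have "(k + n - t) mod n = (if t \<le> k then k - t else k + n - t)"
      using t assms by (auto simp: le_mod_geq)
    ultimately show ?thesis using False e t assms by (auto simp: t_def[symmetric])
  qed
qed

lemma coeff_red_shift:
  assumes n: "n > 0" and p: "p \<in> Rn n" and k: "k < n"
  shows "coeff (red n (monom 1 s * p)) k = coeff p ((k + n - s mod n) mod n)"
proof -
  have "monom 1 s * p = (\<Sum>j<n. smult (coeff p j) (monom 1 (s + j)))"
    by (subst Rn_sum_monoms[OF n p]) (simp add: sum_distrib_left mult_monom smult_monom)
  then have "red n (monom 1 s * p) = (\<Sum>j<n. smult (coeff p j) (monom 1 ((s + j) mod n)))"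
    using n by (simp add: red_sum red_smult red_monom)
  then have "coeff (red n (monom 1 s * p)) k = (\<Sum>j<n. coeff p j * (if (s + j) mod n = k then 1 else 0))"
    by (simp add: coeff_sum coeff_monom)
  also have "\<dots> = (\<Sum>j<n. if j = (k + n - s mod n) mod n then coeff p j else 0)"
    using mod_shift_iff[OF n _ k, of _ s] by (intro sum.cong refl) auto
  also have "\<dots> = coeff p ((k + n - s mod n) mod n)" using n by (simp only: sum.delta finite_lessThan) simp
  finally show ?thesis .
qed

lemma mod_lin: "r < (n::nat) \<Longrightarrow> (r + q * n) mod n = r"
  by simp

lemma X1Xm: "m > 0 \<Longrightarrow> monom (1::bit) 1 * monom 1 (m - 1) = monom 1 m"
  by (simp add: mult_monom)

locale gbc =
  fixes d n k :: nat
  assumes d_def: "d = 2 * k + 3" and n_def: "n = 2 * k * k + 6 * k + 5"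
begin

lemma n_pos: "n > 0" by (simp add: n_def)
lemma n_gt1: "n > 1" by (simp add: n_def)
lemma d_less_n: "d < n" by (simp add: n_def d_def)
lemma n_odd: "odd n" by (simp add: n_def)
lemma dd: "d * d + 1 = 2 * n" by (simp add: n_def d_def algebra_simps)

lemma dd': "Suc (d * d) = 2 * n" using dd by simp
lemma d_pos: "d > 0" by (simp add: d_def)
lemma nmd_mod: "(n - d) mod n = n - d" using d_pos d_less_n by simp
lemma nm1_mod: "(n - 1) mod n = n - 1" using n_pos by simp

lemma nm1: "n - 1 = 2 * k * k + 6 * k + 4" by (simp add: n_def)
lemma nmd: "n - d = 2 * k * k + 4 * k + 2" by (simp add: n_def d_def)

lemma mod1: "(d * (n - 1)) mod n = n - d"
proof -
  have "d * (n - 1) = (n - d) + (2 * k + 2) * n"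
    by (simp add: nm1 nmd) (simp add: n_def d_def algebra_simps)
  show ?thesis unfolding \<open>d * (n - 1) = _\<close> by (rule mod_lin) (use d_less_n d_pos in simp)
qed

lemma mod2: "((n - 1) * d) mod n = n - d"
  using mod1 by (simp add: mult.commute)

lemma mod3: "((n - d) * d) mod n = 1"
proof -
  have e: "(n - d) * d = 1 + (2 * k + 1) * n"
    by (simp add: nmd) (simp add: n_def d_def algebra_simps)
  show ?thesis unfolding e by (rule mod_lin) (rule n_gt1)
qed

lemma mod4: "(d * d * d * d) mod n = 1"
proof -
  have e: "d * d * d * d = 1 + (8 * k * k + 24 * k + 16) * n"
    by (simp add: n_def d_def algebra_simps)
  show ?thesis unfolding e by (rule mod_lin) (rule n_gt1)
qed

lemma mod5: "(d * d) mod n = n - 1"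
proof -
  have e: "d * d = (n - 1) + 1 * n" using dd n_pos by simp
  show ?thesis unfolding e by (rule mod_lin) (use n_pos in simp)
qed

definition "A = 1 + monom (1::bit) 1"
definition "B = 1 + monom (1::bit) d"
definition "Ab = 1 + monom (1::bit) (n - 1)"
definition "Bb = 1 + monom (1::bit) (n - d)"

lemma red_1 [simp]: "red n 1 = 1"
  using n_pos by (intro red_less) simp_all

lemma red_X [simp]: "red n (monom 1 j) = monom 1 (j mod n)"
  using n_pos by (rule red_monom)

lemma inv_A: "inv_sub n A = Ab"
  by (simp add: inv_sub_def subst_pow_def A_def Ab_def pcompose_add pcompose_1 pcompose_XX red_add)
    (use n_pos in simp)

lemma inv_B: "inv_sub n B = Bb"
  by (simp add: inv_sub_def subst_pow_def B_def Bb_def pcompose_add pcompose_1 pcompose_XX red_add mod1[simplified])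

lemma SX_char: "GB_X n A B = {(red n (f * A), red n (f * B)) | f. True}"
  by (simp add: GB_X_def cyc_span_char[OF n_pos])

lemma SZ_char: "GB_Z n A B = {(red n (f * Bb), red n (f * Ab)) | f. True}"
  by (simp add: GB_Z_def cyc_span_char[OF n_pos] inv_A inv_B)

lemma red_cong_multl: "red n p = red n q \<Longrightarrow> red n (p * f) = red n (q * f)"
  by (metis red_mult_left)

lemma O_SX:
  "O_map n d (red n (f * A), red n (f * B)) =
     (red n (pcompose f (monom 1 d) * A), red n (pcompose f (monom 1 d) * B))"
proof -
  define f' where "f' = pcompose f (monom 1 d)"
  have 1: "subst_pow n d (red n (f * B)) = red n (f' * (1 + monom 1 (d * d)))"
    by (simp add: subst_pow_red f'_def B_def pcompose_mult pcompose_add pcompose_1 pcompose_XX)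
  have "red n (monom 1 1 * (1 + monom 1 (d * d))) = red n A"
  proof -
    have "monom (1::bit) 1 * (1 + monom 1 (d * d)) = monom 1 1 + monom 1 (d * d + 1)"
      by (simp add: algebra_simps mult_monom)
    then show ?thesis using n_gt1 by (simp add: red_add A_def dd')
  qed
  then have "xshift n 1 (subst_pow n d (red n (f * B))) = red n (f' * A)"
    unfolding 1 xshift_red
    by (metis (no_types, lifting) mult.left_commute red_cong_mult)
  moreover have "subst_pow n d (red n (f * A)) = red n (f' * B)"
    by (simp add: subst_pow_red f'_def A_def B_def pcompose_mult pcompose_add pcompose_1 pcompose_XX)
  ultimately show ?thesis by (simp add: O_map_def f'_def)
qed

lemma O_SZ:
  "O_map n d (red n (f * Bb), red n (f * Ab)) =
     (red n ((monom 1 1 * pcompose f (monom 1 d)) * Bb), red n ((monom 1 1 * pcompose f (monom 1 d)) * Ab))"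
proof -
  define f' where "f' = pcompose f (monom 1 d)"
  have 1: "subst_pow n d (red n (f * Ab)) = red n (f' * (1 + monom 1 ((n - 1) * d)))"
    by (simp add: subst_pow_red f'_def Ab_def pcompose_mult pcompose_add pcompose_1 pcompose_XX)
  have "red n (1 + monom 1 ((n - 1) * d)) = red n Bb"
    using d_less_n by (simp add: red_add Bb_def mod2[simplified] nmd_mod)
  then have "xshift n 1 (subst_pow n d (red n (f * Ab))) = red n ((monom 1 1 * f') * Bb)"
    unfolding 1 xshift_red
    by (metis (no_types, lifting) mult.assoc red_cong_mult)
  moreover have "subst_pow n d (red n (f * Bb)) = red n ((monom 1 1 * f') * Ab)"
  proof -
    have 2: "subst_pow n d (red n (f * Bb)) = red n (f' * (1 + monom 1 ((n - d) * d)))"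
      by (simp add: subst_pow_red f'_def Bb_def pcompose_mult pcompose_add pcompose_1 pcompose_XX)
    have "monom (1::bit) 1 * Ab = monom 1 1 + monom 1 n"
      using X1Xm[OF n_pos] by (simp add: Ab_def algebra_simps)
    then have "red n (monom 1 1 * Ab) = red n (1 + monom 1 ((n - d) * d))"
      using n_gt1 by (auto simp: red_add mod3[simplified])
    then show ?thesis unfolding 2
      by (metis (no_types, lifting) mult.assoc mult.commute red_cong_mult)
  qed
  ultimately show ?thesis by (simp add: O_map_def f'_def)
qed

lemma pcomp_inv: "red n (pcompose (pcompose h (monom 1 (d * d * d))) (monom 1 d)) = red n h"
proof -
  have "pcompose (pcompose h (monom 1 (d * d * d))) (monom 1 d) = pcompose h (monom 1 (d * d * d * d))"
    by (simp add: pcompose_XX flip: pcompose_assoc)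
  also have "red n \<dots> = red n (pcompose h (monom 1 1))"
    by (rule red_pcomp_inner) (simp only: red_X mod4 mod_less[OF n_gt1])
  finally show ?thesis by (simp only: pcompose_X1)
qed

lemma O_SX_image: "O_map n d ` GB_X n A B = GB_X n A B"
proof (intro equalityI subsetI)
  fix y assume "y \<in> O_map n d ` GB_X n A B"
  then show "y \<in> GB_X n A B" by (auto simp: SX_char O_SX)
next
  fix y assume "y \<in> GB_X n A B"
  then obtain g where y: "y = (red n (g * A), red n (g * B))" by (auto simp: SX_char)
  define f where "f = pcompose g (monom 1 (d * d * d))"
  have "O_map n d (red n (f * A), red n (f * B)) = y"
    unfolding O_SX y f_def using pcomp_inv[of g] by (metis red_cong_multl)
  moreover have "(red n (f * A), red n (f * B)) \<in> GB_X n A B" by (auto simp: SX_char)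
  ultimately show "y \<in> O_map n d ` GB_X n A B" by force
qed

lemma O_SZ_image: "O_map n d ` GB_Z n A B = GB_Z n A B"
proof (intro equalityI subsetI)
  fix y assume "y \<in> O_map n d ` GB_Z n A B"
  then show "y \<in> GB_Z n A B" by (auto simp: SZ_char O_SZ)
next
  fix y assume "y \<in> GB_Z n A B"
  then obtain g where y: "y = (red n (g * Bb), red n (g * Ab))" by (auto simp: SZ_char)
  define f where "f = pcompose (monom 1 (n - 1) * g) (monom 1 (d * d * d))"
  have "red n (monom 1 1 * pcompose f (monom 1 d)) = red n (monom 1 1 * (monom 1 (n - 1) * g))"
    unfolding f_def using pcomp_inv by (metis red_cong_mult)
  also have "\<dots> = red n g"
  proof -
    have e: "monom 1 1 * (monom 1 (n - 1) * g) = monom 1 n * g"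
      by (simp only: mult.assoc[symmetric] X1Xm[OF n_pos])
    have e2: "red n (monom 1 n * g) = red n (1 * g)"
      by (rule red_cong_multl) (simp add: n_pos)
    show ?thesis by (simp only: e e2 mult_1)
  qed
  finally have "O_map n d (red n (f * Bb), red n (f * Ab)) = y"
    unfolding O_SZ y by (metis red_cong_multl)
  moreover have "(red n (f * Bb), red n (f * Ab)) \<in> GB_Z n A B" by (auto simp: SZ_char)
  ultimately show "y \<in> O_map n d ` GB_Z n A B" by force
qed

end

declare add_bit_eq_xor [simp del] mult_bit_eq_and [simp del]

lemma of_nat_bit: "(of_nat m :: bit) = (if odd m then 1 else 0)"
  by (induction m) auto

lemma Rn_zero:
  assumes n: "n > 0" and p: "p \<in> Rn n" and z: "\<And>k. k < n \<Longrightarrow> coeff p k = 0"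
  shows "p = 0"
proof (rule poly_eqI)
  fix k show "coeff p k = coeff 0 k"
    using z Rn_coeff[OF n p, of k] by (cases "k < n") auto
qed

lemma poly_Rn_sum:
  assumes n: "n > 0" and p: "p \<in> Rn n"
  shows "(\<Sum>k<n. coeff p k) = poly p 1"
proof -
  have "poly p 1 = poly (\<Sum>i<n. monom (coeff p i) i) 1"
    using Rn_sum_monoms[OF n p] by simp
  also have "\<dots> = (\<Sum>k<n. coeff p k)" by (simp add: poly_sum poly_monom)
  finally show ?thesis by simp
qed

lemma poly_red: "poly (red n p) 1 = poly p 1"
proof -
  have "p = (p div cyc n) * cyc n + red n p" by (simp add: red_def)
  then have "poly p 1 = poly (p div cyc n) 1 * poly (cyc n) 1 + poly (red n p) 1"
    by (metis poly_add poly_mult)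
  moreover have "poly (cyc n) 1 = 0" by (simp add: cyc_bit poly_monom)
  ultimately show ?thesis by simp
qed

lemma red_Rn: "p \<in> Rn n \<Longrightarrow> red n p = p"
  by (simp add: Rn_def)

lemma Rn_add: "p \<in> Rn n \<Longrightarrow> q \<in> Rn n \<Longrightarrow> p + q \<in> Rn n"
  by (simp add: Rn_def red_add)

lemma Rn_0 [simp]: "0 \<in> Rn n"
  by (simp add: Rn_def)

lemma dot_vadd: "dot n (vadd u v) s = dot n u s + dot n v s"
  by (simp add: dot_def vadd_def algebra_simps sum.distrib)

lemma sum_delta_bit: "i < (n::nat) \<Longrightarrow> (\<Sum>k<n. (c k :: bit) * (if i = k then 1 else 0)) = c i"
proof -
  assume i: "i < n"
  have "(\<Sum>k<n. c k * (if i = k then 1 else 0)) = (\<Sum>k<n. if i = k then c k else 0)"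
    by (intro sum.cong) auto
  also have "\<dots> = c i" using i by simp
  finally show ?thesis .
qed

lemma dot_two:
  assumes "i < n" "j < n" "i' < n" "j' < n"
  shows "dot n (p, q) (monom 1 i + monom 1 j, monom 1 i' + monom 1 j') =
         coeff p i + coeff p j + coeff q i' + coeff q j'"
  by (simp only: dot_def fst_conv snd_conv coeff_add coeff_monom distrib_left sum.distrib
      sum_delta_bit assms add.assoc)

lemma factor_A: "poly (p::bit poly) 1 = 0 \<Longrightarrow> \<exists>p'. p = (1 + monom 1 1) * p'"
proof -
  assume "poly p 1 = 0"
  then have "[:-1, 1:] dvd p" by (simp add: poly_eq_0_iff_dvd)
  moreover have "[:-1, 1:] = (1 + monom (1::bit) 1)"
    by (simp add: poly_eq_iff coeff_pCons coeff_monom split: nat.split)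
  ultimately show ?thesis by (auto elim: dvdE)
qed

lemma geom: "(1 + monom (1::bit) 1) * (\<Sum>i<m. monom 1 i) = 1 + monom 1 m"
proof (induction m)
  case 0 then show ?case by simp
next
  case (Suc m)
  have "(1 + monom (1::bit) 1) * (\<Sum>i<Suc m. monom 1 i) = (1 + monom 1 m) + (1 + monom (1::bit) 1) * monom 1 m"
    by (simp add: Suc.IH[simplified] distrib_left)
  also have "\<dots> = 1 + monom 1 (Suc m)"
    by (simp add: algebra_simps mult_monom)
  finally show ?case .
qed

context gbc
begin

definition "Jn = (\<Sum>i<n. monom (1::bit) i)"

lemma coeff_J: "coeff Jn i = (if i < n then 1 else 0)"
  by (simp add: Jn_def coeff_sum coeff_monom)

lemma J_Rn: "Jn \<in> Rn n"
  by (simp add: Rn_def Jn_def red_sum)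

lemma poly_J: "poly Jn 1 = 1"
  using n_odd by (simp add: Jn_def poly_sum poly_monom of_nat_bit)

lemma cyc_AJ: "cyc n = A * Jn"
  by (simp only: cyc_bit A_def Jn_def geom add.commute)

lemma dot_J0: "p \<in> Rn n \<Longrightarrow> dot n (Jn, 0) (p, q) = poly p 1"
  by (simp add: dot_def coeff_J poly_Rn_sum[OF n_pos])

lemma dot_0J: "q \<in> Rn n \<Longrightarrow> dot n (0, Jn) (p, q) = poly q 1"
  by (simp add: dot_def coeff_J poly_Rn_sum[OF n_pos])

lemma dot_JJ: "p \<in> Rn n \<Longrightarrow> q \<in> Rn n \<Longrightarrow> dot n (Jn, Jn) (p, q) = poly p 1 + poly q 1"
  by (simp add: dot_def coeff_J sum.distrib poly_Rn_sum[OF n_pos])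

lemma poly_A: "poly A 1 = 0" by (simp add: A_def poly_monom)
lemma poly_B: "poly B 1 = 0" by (simp add: B_def poly_monom)
lemma poly_Ab: "poly Ab 1 = 0" by (simp add: Ab_def poly_monom)
lemma poly_Bb: "poly Bb 1 = 0" by (simp add: Bb_def poly_monom)

lemma SX_poly: "s \<in> GB_X n A B \<Longrightarrow> fst s \<in> Rn n \<and> snd s \<in> Rn n \<and> poly (fst s) 1 = 0 \<and> poly (snd s) 1 = 0"
  by (auto simp: SX_char poly_red poly_A poly_B)

lemma SZ_poly: "s \<in> GB_Z n A B \<Longrightarrow> fst s \<in> Rn n \<and> snd s \<in> Rn n \<and> poly (fst s) 1 = 0 \<and> poly (snd s) 1 = 0"
  by (auto simp: SZ_char poly_red poly_Ab poly_Bb)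

lemma orth_J0: "(Jn, 0) \<in> orth n S" if "\<And>s. s \<in> S \<Longrightarrow> fst s \<in> Rn n \<and> snd s \<in> Rn n \<and> poly (fst s) 1 = 0 \<and> poly (snd s) 1 = 0"
  using that by (auto simp: orth_def Rvec_def J_Rn dot_J0)

lemma orth_0J: "(0, Jn) \<in> orth n S" if "\<And>s. s \<in> S \<Longrightarrow> fst s \<in> Rn n \<and> snd s \<in> Rn n \<and> poly (fst s) 1 = 0 \<and> poly (snd s) 1 = 0"
  using that by (auto simp: orth_def Rvec_def J_Rn dot_0J)

lemma orth_JJ: "(Jn, Jn) \<in> orth n S" if "\<And>s. s \<in> S \<Longrightarrow> fst s \<in> Rn n \<and> snd s \<in> Rn n \<and> poly (fst s) 1 = 0 \<and> poly (snd s) 1 = 0"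
  using that by (auto simp: orth_def Rvec_def J_Rn dot_JJ)

lemma orth_vadd: "u \<in> orth n S \<Longrightarrow> v \<in> orth n S \<Longrightarrow> vadd u v \<in> orth n S"
  by (auto simp: orth_def Rvec_def vadd_def Rn_add dot_vadd[unfolded vadd_def])

lemma orth_bsc: "u \<in> orth n S \<Longrightarrow> bsc c u \<in> orth n S"
  by (auto simp: orth_def bsc_def Rvec_def dot_def)

lemma red_A [simp]: "red n A = A"
  using n_gt1 by (simp add: A_def red_add)

lemma XJ: "red n (monom 1 1 * Jn) = Jn"
proof -
  have "monom 1 1 * Jn = cyc n + Jn" by (simp add: cyc_AJ A_def algebra_simps)
  then show ?thesis using J_Rn by (simp add: red_add red_Rn)
qed

lemma xshift_J: "xshift n 1 Jn = Jn"
  unfolding xshift_def by (rule XJ)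

lemma subst_J: "subst_pow n d Jn = Jn"
proof -
  define h where "h i = (i * d) mod n" for i
  have inj: "inj_on h {..<n}"
  proof (rule inj_onI)
    fix i j assume i: "i \<in> {..<n}" and j: "j \<in> {..<n}" and e: "h i = h j"
    have key: "x mod n = ((x * d) mod n * (d * d * d)) mod n" for x
    proof -
      have "x mod n = (x * (d * d * d * d mod n)) mod n" by (simp add: mod4)
      also have "\<dots> = (x * (d * d * d * d)) mod n" by (simp add: mod_mult_right_eq)
      also have "\<dots> = ((x * d) * (d * d * d)) mod n" by (simp add: algebra_simps)
      also have "\<dots> = ((x * d) mod n * (d * d * d)) mod n" by (simp add: mod_mult_left_eq)
      finally show ?thesis .
    qed
    have "i mod n = j mod n" using key[of i] key[of j] e by (simp add: h_def)
    then show "i = j" using i j by simp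
  qed
  have img: "h ` {..<n} = {..<n}"
    by (rule endo_inj_surj) (auto simp: h_def inj n_pos)
  have "subst_pow n d Jn = (\<Sum>i<n. monom 1 (h i))"
    by (simp add: subst_pow_def Jn_def pcompose_sum pcompose_XX red_sum h_def)
  also have "\<dots> = (\<Sum>j\<in>h ` {..<n}. monom 1 j)"
    by (simp add: sum.reindex[OF inj])
  also have "\<dots> = Jn" by (simp add: img Jn_def)
  finally show ?thesis .
qed

end

context gbc
begin

lemma orthD: "v \<in> orth n S \<Longrightarrow> fst v \<in> Rn n \<and> snd v \<in> Rn n \<and> (\<forall>s\<in>S. dot n v s = 0)"
  by (auto simp: orth_def Rvec_def)

lemma red_zero_dvd: "red n p = 0 \<Longrightarrow> cyc n dvd p"
  using red_eq_iff[of n p 0] by simp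

lemma A_nz: "A \<noteq> 0"
proof
  assume "A = 0"
  then have "poly A 0 = 0" by simp
  then show False by (simp add: A_def poly_monom)
qed

lemma cancel_A:
  assumes "cyc n dvd A * h" and "poly h 1 = 0"
  shows "cyc n dvd h"
proof -
  from assms(1) obtain g where "A * h = A * Jn * g" by (auto simp: cyc_AJ elim: dvdE)
  then have h: "h = Jn * g" using A_nz by (simp add: mult.assoc)
  then have "poly g 1 = 0" using assms(2) poly_J by simp
  then obtain g' where "g = A * g'" using factor_A[of g] by (auto simp: A_def)
  then have "h = cyc n * g'" by (simp add: h cyc_AJ algebra_simps)
  then show ?thesis by simp
qed

lemma rel_Z:
  assumes "(P, Q) \<in> orth n (GB_Z n A B)"
  shows "red n (P * B + Q * A) = 0"
proof -
  have P: "P \<in> Rn n" and Q: "Q \<in> Rn n" and D: "\<And>s. s \<in> GB_Z n A B \<Longrightarrow> dot n (P, Q) s = 0"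
    using orthD[OF assms] by auto
  have R: "red n (P * B + Q * A) = P + red n (monom 1 d * P) + Q + red n (monom 1 1 * Q)"
    by (simp add: A_def B_def distrib_left distrib_right red_add red_Rn[OF P] red_Rn[OF Q]
        mult.commute add.assoc)
  show ?thesis
  proof (rule Rn_zero[OF n_pos])
    show "red n (P * B + Q * A) \<in> Rn n" by simp
    fix k assume k: "k < n"
    have e1: "k + (n - d) = k + n - d" and e2: "k + (n - 1) = k + n - 1" using d_less_n by auto
    have "red n (monom 1 k * Bb) = monom 1 k + monom 1 ((k + n - d) mod n)"
      using k by (simp add: Bb_def distrib_left mult_monom red_add e1)
    moreover have "red n (monom 1 k * Ab) = monom 1 k + monom 1 ((k + n - 1) mod n)"
      using k by (simp add: Ab_def distrib_left mult_monom red_add e2)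
    ultimately have "(monom 1 k + monom 1 ((k + n - d) mod n), monom 1 k + monom 1 ((k + n - 1) mod n))
        \<in> GB_Z n A B"
      unfolding SZ_char by (metis (mono_tags, lifting) mem_Collect_eq)
    then have "dot n (P, Q) (monom 1 k + monom 1 ((k + n - d) mod n), monom 1 k + monom 1 ((k + n - 1) mod n)) = 0"
      by (rule D)
    then have z: "coeff P k + coeff P ((k + n - d) mod n) + coeff Q k + coeff Q ((k + n - 1) mod n) = 0"
      using k n_pos by (simp add: dot_two)
    have "coeff (red n (P * B + Q * A)) k
        = coeff P k + coeff P ((k + n - d mod n) mod n) + coeff Q k + coeff Q ((k + n - 1 mod n) mod n)"
      unfolding R using coeff_red_shift[OF n_pos P k, of d] coeff_red_shift[OF n_pos Q k, of 1]
      by (simp add: add.assoc)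
    also have "\<dots> = 0" using z d_less_n n_gt1 by simp
    finally show "coeff (red n (P * B + Q * A)) k = 0" .
  qed
qed

lemma rel_X:
  assumes "(P, Q) \<in> orth n (GB_X n A B)"
  shows "red n (P * Ab + Q * Bb) = 0"
proof -
  have P: "P \<in> Rn n" and Q: "Q \<in> Rn n" and D: "\<And>s. s \<in> GB_X n A B \<Longrightarrow> dot n (P, Q) s = 0"
    using orthD[OF assms] by auto
  have R: "red n (P * Ab + Q * Bb) = P + red n (monom 1 (n - 1) * P) + Q + red n (monom 1 (n - d) * Q)"
    by (simp add: Ab_def Bb_def distrib_left distrib_right red_add red_Rn[OF P] red_Rn[OF Q]
        mult.commute add.assoc)
  show ?thesis
  proof (rule Rn_zero[OF n_pos])
    show "red n (P * Ab + Q * Bb) \<in> Rn n" by simp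
    fix k assume k: "k < n"
    have "red n (monom 1 k * A) = monom 1 k + monom 1 ((k + 1) mod n)"
      using k by (simp add: A_def distrib_left mult_monom red_add)
    moreover have "red n (monom 1 k * B) = monom 1 k + monom 1 ((k + d) mod n)"
      using k by (simp add: B_def distrib_left mult_monom red_add)
    ultimately have "(monom 1 k + monom 1 ((k + 1) mod n), monom 1 k + monom 1 ((k + d) mod n))
        \<in> GB_X n A B"
      unfolding SX_char by (metis (mono_tags, lifting) mem_Collect_eq)
    then have "dot n (P, Q) (monom 1 k + monom 1 ((k + 1) mod n), monom 1 k + monom 1 ((k + d) mod n)) = 0"
      by (rule D)
    then have z: "coeff P k + coeff P ((k + 1) mod n) + coeff Q k + coeff Q ((k + d) mod n) = 0"
      using k n_pos by (simp add: dot_two)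
    have e1: "k + n - (n - 1) = k + 1" and e2: "k + n - (n - d) = k + d" using d_less_n n_pos by auto
    have "coeff (red n (P * Ab + Q * Bb)) k
        = coeff P k + coeff P ((k + n - (n - 1) mod n) mod n) + coeff Q k + coeff Q ((k + n - (n - d) mod n) mod n)"
      unfolding R using coeff_red_shift[OF n_pos P k, of "n - 1"] coeff_red_shift[OF n_pos Q k, of "n - d"]
      by (simp add: add.assoc)
    also have "\<dots> = 0" using z by (simp only: nm1_mod nmd_mod e1 e2)
    finally show "coeff (red n (P * Ab + Q * Bb)) k = 0" .
  qed
qed

lemma core_X:
  assumes o: "(P, Q) \<in> orth n (GB_Z n A B)" and p: "poly P 1 = 0" and q: "poly Q 1 = 0"
  shows "(P, Q) \<in> GB_X n A B"
proof -
  have P: "P \<in> Rn n" and Q: "Q \<in> Rn n" using orthD[OF o] by auto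
  obtain P' where P': "P = A * P'" using factor_A[OF p] by (auto simp: A_def)
  have "cyc n dvd P * B + Q * A" using rel_Z[OF o] by (rule red_zero_dvd)
  also have "P * B + Q * A = A * (P' * B + Q)" by (simp add: P' algebra_simps)
  finally have "cyc n dvd P' * B + Q"
    by (rule cancel_A) (simp add: poly_B q)
  then have "red n (P' * B) = Q" by (metis red_eq_iff red_Rn[OF Q])
  moreover have "red n (P' * A) = P" using red_Rn[OF P] by (simp add: P' mult.commute)
  ultimately show ?thesis unfolding SX_char by (metis (mono_tags, lifting) mem_Collect_eq)
qed

lemma XAb: "red n (monom 1 1 * Ab) = A"
proof -
  have "monom (1::bit) 1 * Ab = monom 1 1 + monom 1 n"
    using X1Xm[OF n_pos] by (simp add: Ab_def algebra_simps)
  then show ?thesis using n_gt1 by (simp add: red_add A_def add.commute)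
qed

lemma core_Z:
  assumes o: "(P, Q) \<in> orth n (GB_X n A B)" and p: "poly P 1 = 0" and q: "poly Q 1 = 0"
  shows "(P, Q) \<in> GB_Z n A B"
proof -
  have P: "P \<in> Rn n" and Q: "Q \<in> Rn n" using orthD[OF o] by auto
  obtain Q' where Q': "Q = A * Q'" using factor_A[OF q] by (auto simp: A_def)
  define f where "f = monom 1 1 * Q'"
  have fAb: "red n (f * Ab) = Q"
  proof -
    have "red n (f * Ab) = red n (Q' * (monom 1 1 * Ab))" by (simp add: f_def algebra_simps)
    also have "\<dots> = red n (Q' * A)" using XAb by (metis red_mult_right)
    finally show ?thesis using red_Rn[OF Q] by (simp add: Q' mult.commute)
  qed
  have "red n (Ab * (P + f * Bb)) = red n (P * Ab) + red n ((f * Ab) * Bb)"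
    by (simp add: algebra_simps red_add)
  also have "red n ((f * Ab) * Bb) = red n (Q * Bb)"
    using fAb red_Rn[OF Q] by (metis red_mult_left)
  also have "red n (P * Ab) + red n (Q * Bb) = 0" using rel_X[OF o] by (simp add: red_add)
  finally have z: "red n (Ab * (P + f * Bb)) = 0" .
  have "red n (A * (P + f * Bb)) = red n ((monom 1 1 * Ab) * (P + f * Bb))"
    using XAb by (metis red_mult_left)
  also have "\<dots> = red n (monom 1 1 * (Ab * (P + f * Bb)))" by (simp add: mult.assoc)
  also have "\<dots> = 0" using z by (metis red_mult_right mult_zero_right red_0)
  finally have "cyc n dvd A * (P + f * Bb)" by (rule red_zero_dvd)
  then have "cyc n dvd P + f * Bb" by (rule cancel_A) (simp add: p poly_Bb)
  then have "red n (f * Bb) = P" by (metis red_eq_iff red_Rn[OF P] add.commute)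
  with fAb show ?thesis unfolding SZ_char by (metis (mono_tags, lifting) mem_Collect_eq)
qed

lemma bit_cases2: "(c::bit) = 0 \<or> c = 1" by (cases c) auto

lemma complete_X:
  assumes v: "v \<in> orth n (GB_Z n A B)"
  shows "\<exists>c1 c2. vadd v (vadd (bsc c1 (Jn, 0)) (bsc c2 (Jn, Jn))) \<in> GB_X n A B"
proof -
  obtain p q where pq: "v = (p, q)" by (cases v)
  define c2 where "c2 = (poly q 1 = 1)"
  define c1 where "c1 = (poly p 1 \<noteq> poly q 1)"
  define V where "V = vadd v (vadd (bsc c1 (Jn, 0)) (bsc c2 (Jn, Jn)))"
  have o: "V \<in> orth n (GB_Z n A B)" unfolding V_def
    by (intro orth_vadd orth_bsc v orth_J0 orth_JJ SZ_poly)
  have "poly (fst V) 1 = 0 \<and> poly (snd V) 1 = 0"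
    using bit_cases2[of "poly p 1"] bit_cases2[of "poly q 1"]
    by (auto simp: V_def pq vadd_def bsc_def c1_def c2_def poly_J)
  then have "(fst V, snd V) \<in> GB_X n A B" using o by (intro core_X) auto
  then show ?thesis unfolding V_def by auto
qed

lemma complete_Z:
  assumes v: "v \<in> orth n (GB_X n A B)"
  shows "\<exists>c1 c2. vadd v (vadd (bsc c1 (Jn, Jn)) (bsc c2 (0, Jn))) \<in> GB_Z n A B"
proof -
  obtain p q where pq: "v = (p, q)" by (cases v)
  define c1 where "c1 = (poly p 1 = 1)"
  define c2 where "c2 = (poly p 1 \<noteq> poly q 1)"
  define V where "V = vadd v (vadd (bsc c1 (Jn, Jn)) (bsc c2 (0, Jn)))"
  have o: "V \<in> orth n (GB_X n A B)" unfolding V_def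
    by (intro orth_vadd orth_bsc v orth_0J orth_JJ SX_poly)
  have "poly (fst V) 1 = 0 \<and> poly (snd V) 1 = 0"
    using bit_cases2[of "poly p 1"] bit_cases2[of "poly q 1"]
    by (auto simp: V_def pq vadd_def bsc_def c1_def c2_def poly_J)
  then have "(fst V, snd V) \<in> GB_Z n A B" using o by (intro core_Z) auto
  then show ?thesis unfolding V_def by auto
qed

lemma zero_SX: "(0, 0) \<in> GB_X n A B"
  unfolding SX_char by (metis (mono_tags, lifting) mem_Collect_eq mult_zero_left red_0)

lemma zero_SZ: "(0, 0) \<in> GB_Z n A B"
  unfolding SZ_char by (metis (mono_tags, lifting) mem_Collect_eq mult_zero_left red_0)

lemma subst_0: "subst_pow n d 0 = 0" by (simp add: subst_pow_def)
lemma xshift_0: "xshift n 1 0 = 0" by (simp add: xshift_def)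

lemma O_J0: "O_map n d (Jn, 0) = (0, Jn)"
  by (simp only: O_map_def fst_conv snd_conv subst_J xshift_J subst_0 xshift_0)

lemma O_0J: "O_map n d (0, Jn) = (Jn, 0)"
  by (simp only: O_map_def fst_conv snd_conv subst_J xshift_J subst_0 xshift_0)

lemma O_JJ: "O_map n d (Jn, Jn) = (Jn, Jn)"
  by (simp only: O_map_def fst_conv snd_conv subst_J xshift_J subst_0 xshift_0)

lemma main: "implements_logical_CNOT n (GB_X n A B) (GB_Z n A B) (O_map n d)"
proof -
  have h1: "(Jn, 0) \<in> orth n (GB_Z n A B)" by (intro orth_J0 SZ_poly)
  have h2: "(Jn, Jn) \<in> orth n (GB_Z n A B)" by (intro orth_JJ SZ_poly)
  have h3: "(Jn, Jn) \<in> orth n (GB_X n A B)" by (intro orth_JJ SX_poly)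
  have h4: "(0, Jn) \<in> orth n (GB_X n A B)" by (intro orth_0J SX_poly)
  have h5: "dot n (Jn, 0) (Jn, Jn) = 1" using J_Rn by (simp add: dot_J0 poly_J)
  have h6: "dot n (Jn, 0) (0, Jn) = 0" by (simp add: dot_J0)
  have h7: "dot n (Jn, Jn) (Jn, Jn) = 0" using J_Rn by (simp add: dot_JJ poly_J)
  have h8: "dot n (Jn, Jn) (0, Jn) = 1" using J_Rn by (simp add: dot_JJ poly_J)
  have h9: "\<forall>v\<in>orth n (GB_Z n A B). \<exists>c1 c2. vadd v (vadd (bsc c1 (Jn, 0)) (bsc c2 (Jn, Jn))) \<in> GB_X n A B"
    using complete_X by blast
  have h10: "\<forall>w\<in>orth n (GB_X n A B). \<exists>c1 c2. vadd w (vadd (bsc c1 (Jn, Jn)) (bsc c2 (0, Jn))) \<in> GB_Z n A B"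
    using complete_Z by blast
  have h11: "vadd (O_map n d (Jn, 0)) (vadd (Jn, 0) (Jn, Jn)) \<in> GB_X n A B"
    using zero_SX by (simp add: O_J0 vadd_def)
  have h12: "vadd (O_map n d (Jn, Jn)) (Jn, Jn) \<in> GB_X n A B"
    using zero_SX by (simp add: O_JJ vadd_def)
  have h13: "vadd (O_map n d (Jn, Jn)) (Jn, Jn) \<in> GB_Z n A B"
    using zero_SZ by (simp add: O_JJ vadd_def)
  have h14: "vadd (O_map n d (0, Jn)) (vadd (Jn, Jn) (0, Jn)) \<in> GB_Z n A B"
    using zero_SZ by (simp add: O_0J vadd_def)
  show ?thesis
    unfolding implements_logical_CNOT_def
    apply (intro conjI O_SX_image O_SZ_image)
    apply (rule exI[of _ "(Jn, 0)"], rule exI[of _ "(Jn, Jn)"], rule exI[of _ "(Jn, Jn)"], rule exI[of _ "(0, Jn)"])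
    by (intro conjI h1 h2 h3 h4 h5 h6 h7 h8 h9 h10 h11 h12 h13 h14)
qed

end

theorem theorem6:
  fixes d n :: nat and a b :: "bit poly"
  assumes "odd d" and "d \<ge> 3"
    and "n = (d^2 + 1) div 2"
    and "a = 1 + monom 1 1"
    and "b = 1 + monom 1 d"
  shows "implements_logical_CNOT n (GB_X n a b) (GB_Z n a b) (O_map n d)"
proof -
  define k where "k = (d - 3) div 2"
  have d: "d = 2 * k + 3" using assms(1,2) unfolding k_def by presburger
  have "d^2 + 1 = 2 * (2 * k * k + 6 * k + 5)" by (simp add: d power2_eq_square algebra_simps)
  then have n: "n = 2 * k * k + 6 * k + 5" using assms(3) by simp
  interpret gbc d n k using d n by unfold_locales
  show ?thesis using main by (simp add: assms(4,5) A_def B_def)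
qed

end
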